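(* For every $n\ge 0$, a permutation $\pi$ of $\{1,\ldots,n\}$ can be produced as the output of a loosely locked jump queue with input $1,2,\ldots,n$ if and only if $\pi$ avoids the pattern $4231$.
   Context: A permutation $\pi=\pi_1\cdots\pi_n$ contains a pattern $\alpha=\alpha_1\cdots\alpha_k$ (a permutation of $\{1,\ldots,k\}$) if there are indices $i_1<\cdots<i_k$ with $\pi_{i_r}<\pi_{i_s}$ iff $\alpha_r<\alpha_s$; otherwise $\pi$ avoids $\alpha$. Jump queues. The input is $1,2,\ldots,n$, and at each step one may either append the next input element to the rear of the queue, or remove (output) some element of the queue; the sequence of outputs forms a permutation of $1,\ldots,n$ once all elements have been output. The front element of the queue may always be output. Outputting an element other than the front element is called a jump, and an element may jump only if it is not locked. When an element $x$ jumps, every element currently in the queue behind $x$ (closer to the rear) becomes locked; this lock is released at the moment when all elements that were in front of $x$ at the time of the jump have been output. An element is locked as long as at least one lock applying to it is in force. (In particular jumping the rear element locks nothing.) - In a loosely locked jump queue, newly appended elements are initially unlocked. *)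

theory Defs
  imports Main
begin

definition contains_pattern :: "nat list \<Rightarrow> nat list \<Rightarrow> bool" where
  "contains_pattern p a \<longleftrightarrow>
     (\<exists>idx. length idx = length a \<and> sorted_wrt (<) idx \<and> (\<forall>i\<in>set idx. i < length p) \<and>
        (\<forall>r < length a. \<forall>s < length a. (p ! (idx ! r) < p ! (idx ! s) \<longleftrightarrow> a ! r < a ! s)))"

definition avoids :: "nat list \<Rightarrow> nat list \<Rightarrow> bool" where
  "avoids p a \<longleftrightarrow> \<not> contains_pattern p a"

definition is_perm :: "nat \<Rightarrow> nat list \<Rightarrow> bool" where
  "is_perm n p \<longleftrightarrow> distinct p \<and> set p = {1..n}"

text \<open>A lock is a pair (locked elements, elements that were in front of the jumping
  element). It is in force while some of the latter is still in the queue.\<close>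
definition locked :: "nat list \<Rightarrow> (nat set \<times> nat set) list \<Rightarrow> nat \<Rightarrow> bool" where
  "locked q L x \<longleftrightarrow> (\<exists>(A, B) \<in> set L. x \<in> A \<and> B \<inter> set q \<noteq> {})"

text \<open>Reachable configurations of a loosely locked jump queue with input 1..n:
  next input element m, queue q (front first), locks L, output so far.\<close>
inductive ll_jq :: "nat \<Rightarrow> nat \<Rightarrow> nat list \<Rightarrow> (nat set \<times> nat set) list \<Rightarrow> nat list \<Rightarrow> bool"
  for n :: nat where
  init: "ll_jq n 1 [] [] []"
| push: "ll_jq n m q L out \<Longrightarrow> m \<le> n \<Longrightarrow> ll_jq n (Suc m) (q @ [m]) L out"
| pop_front: "ll_jq n m (x # q) L out \<Longrightarrow> ll_jq n m q L (out @ [x])"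
| jump: "ll_jq n m q L out \<Longrightarrow> 0 < i \<Longrightarrow> i < length q \<Longrightarrow> \<not> locked q L (q ! i) \<Longrightarrow>
     ll_jq n m (take i q @ drop (Suc i) q) ((set (drop (Suc i) q), set (take i q)) # L)
       (out @ [q ! i])"

definition ll_jq_output :: "nat \<Rightarrow> nat list \<Rightarrow> bool" where
  "ll_jq_output n p \<longleftrightarrow> (\<exists>L. ll_jq n (Suc n) [] L p)"

end

theory Submission
  imports Defs
begin

lemma four_cases: "r < (4::nat) \<Longrightarrow> r = 0 \<or> r = 1 \<or> r = 2 \<or> r = 3" by arith

lemma pat_if:
  assumes h: "i<j" "j<k" "k<l" "l<length p" "p!l < p!j" "p!j < p!k" "p!k < p!i"
  shows "contains_pattern p [4,2,3,1]"
  unfolding contains_pattern_def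
proof (rule exI[of _ "[i,j,k,l]"], intro conjI)
  show "\<forall>r<length [4, 2, 3, 1::nat]. \<forall>s<length [4, 2, 3, 1::nat].
     (p ! ([i, j, k, l] ! r) < p ! ([i, j, k, l] ! s)) = ([4, 2, 3, 1::nat] ! r < [4, 2, 3, 1] ! s)"
  proof (intro allI impI)
    fix r s :: nat assume "r < length [4,2,3,1::nat]" "s < length [4,2,3,1::nat]"
    then have "r = 0 \<or> r = 1 \<or> r = 2 \<or> r = 3" "s = 0 \<or> s = 1 \<or> s = 2 \<or> s = 3"
      using four_cases by simp_all
    then show "p ! ([i, j, k, l] ! r) < p ! ([i, j, k, l] ! s) \<longleftrightarrow> [4,2,3,1::nat] ! r < [4,2,3,1] ! s"
      using h by (elim disjE) auto
  qed
qed (use h in auto)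

lemma pat_only:
  assumes "contains_pattern p [4,2,3,1]"
  shows "\<exists>i j k l. i<j \<and> j<k \<and> k<l \<and> l<length p \<and> p!l < p!j \<and> p!j < p!k \<and> p!k < p!i"
proof -
  obtain idx where L: "length idx = length [4,2,3,1::nat]" and S: "sorted_wrt (<) idx"
    and B: "\<forall>i\<in>set idx. i < length p"
    and R: "\<forall>r<length [4,2,3,1::nat]. \<forall>s<length [4,2,3,1::nat]. (p!(idx!r) < p!(idx!s) \<longleftrightarrow> [4,2,3,1::nat]!r < [4,2,3,1]!s)"
    using assms unfolding contains_pattern_def by blast
  have L4: "length idx = 4" using L by simp
  have 1: "p!(idx!1) < p!(idx!2)" using R[rule_format, of 1 2] L4 by simp
  have 2: "p!(idx!3) < p!(idx!1)" using R[rule_format, of 3 1] L4 by simp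
  have 3: "p!(idx!2) < p!(idx!0)" using R[rule_format, of 2 0] L4 by simp
  have o1: "idx!0 < idx!1" using S L4 sorted_wrt_nth_less by fastforce
  have o2: "idx!1 < idx!2" using S L4 sorted_wrt_nth_less by fastforce
  have o3: "idx!2 < idx!3" using S L4 sorted_wrt_nth_less by fastforce
  have b: "idx!3 < length p" using B L4 nth_mem by fastforce
  show ?thesis using 1 2 3 o1 o2 o3 b by blast
qed

lemma pat_iff:
  "contains_pattern p [4,2,3,1] \<longleftrightarrow>
   (\<exists>i j k l. i<j \<and> j<k \<and> k<l \<and> l<length p \<and> p!l < p!j \<and> p!j < p!k \<and> p!k < p!i)"
proof
  assume "contains_pattern p [4,2,3,1]"
  then show "\<exists>i j k l. i<j \<and> j<k \<and> k<l \<and> l<length p \<and> p!l < p!j \<and> p!j < p!k \<and> p!k < p!i"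
    by (rule pat_only)
next
  assume "\<exists>i j k l. i<j \<and> j<k \<and> k<l \<and> l<length p \<and> p!l < p!j \<and> p!j < p!k \<and> p!k < p!i"
  then obtain i j k l where "i<j" "j<k" "k<l" "l<length p" "p!l < p!j" "p!j < p!k" "p!k < p!i"
    by blast
  then show "contains_pattern p [4,2,3,1]" by (rule pat_if)
qed

lemma sorted_split:
  assumes "sorted_wrt (<) q" "i < length q"
  shows "\<forall>a\<in>set (take i q). a < q!i" "\<forall>a\<in>set (drop (Suc i) q). q!i < a"
    "set q = set (take i q) \<union> {q!i} \<union> set (drop (Suc i) q)"
proof -
  have e: "q = take i q @ q!i # drop (Suc i) q" using assms(2) by (simp add: id_take_nth_drop)
  have s: "sorted_wrt (<) (take i q @ q!i # drop (Suc i) q)" using assms(1) e by metis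
  show "\<forall>a\<in>set (take i q). a < q!i" "\<forall>a\<in>set (drop (Suc i) q). q!i < a"
    using s by (auto simp: sorted_wrt_append)
  show "set q = set (take i q) \<union> {q!i} \<union> set (drop (Suc i) q)"
  proof -
    have "set q = set (take i q @ q!i # drop (Suc i) q)" using e by metis
    then show ?thesis by auto
  qed
qed

lemma sorted_remove:
  assumes "sorted_wrt (<) q" "i < length q"
  shows "sorted_wrt (<) (take i q @ drop (Suc i) q)"
proof -
  have e: "q = take i q @ q!i # drop (Suc i) q" using assms(2) by (simp add: id_take_nth_drop)
  have s: "sorted_wrt (<) (take i q @ q!i # drop (Suc i) q)" using assms(1) e by metis
  then show ?thesis by (auto simp: sorted_wrt_append)
qed

lemma remove_filter:
  assumes "distinct q" "i < length q"
  shows "take i q @ drop (Suc i) q = filter (\<lambda>y. y \<noteq> q!i) q"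
proof -
  have e: "q = take i q @ q!i # drop (Suc i) q" using assms(2) by (simp add: id_take_nth_drop)
  have d: "distinct (take i q @ q!i # drop (Suc i) q)" using assms(1) e by metis
  have a: "filter (\<lambda>y. y \<noteq> q!i) (take i q) = take i q"
    using d by (subst filter_id_conv) auto
  have b: "filter (\<lambda>y. y \<noteq> q!i) (drop (Suc i) q) = drop (Suc i) q"
    using d by (subst filter_id_conv) auto
  have c: "filter (\<lambda>y. y \<noteq> q!i) (take i q @ q!i # drop (Suc i) q) = take i q @ drop (Suc i) q"
    using a b by simp
  have f: "filter (\<lambda>y. y \<noteq> q!i) q = filter (\<lambda>y. y \<noteq> q!i) (take i q @ q!i # drop (Suc i) q)"
    by (rule arg_cong[OF e])
  show ?thesis using trans[OF f c] by (rule sym)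
qed

definition inv1 :: "nat \<Rightarrow> nat list \<Rightarrow> (nat set \<times> nat set) list \<Rightarrow> nat list \<Rightarrow> bool" where
  "inv1 m q L out \<longleftrightarrow> sorted_wrt (<) q \<and> (\<forall>x\<in>set q. x < m) \<and> (\<forall>x\<in>set out. x < m) \<and>
    (\<forall>i j. i < j \<longrightarrow> j < length out \<longrightarrow> out!j < out!i \<longrightarrow>
       (\<forall>y\<in>set q. \<forall>c\<in>set q. y < out!j \<longrightarrow> out!j < c \<longrightarrow> c < out!i \<longrightarrow>
          (\<exists>(A,B)\<in>set L. c \<in> A \<and> y \<in> B))) \<and>
    (\<forall>i j k. i < j \<longrightarrow> j < k \<longrightarrow> k < length out \<longrightarrow> out!j < out!k \<longrightarrow> out!k < out!i \<longrightarrow>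
       (\<forall>y\<in>set q. \<not> y < out!j)) \<and>
    (\<forall>i j k l. i < j \<longrightarrow> j < k \<longrightarrow> k < l \<longrightarrow> l < length out \<longrightarrow>
       \<not> (out!l < out!j \<and> out!j < out!k \<and> out!k < out!i))"

lemma nth_app_last: "j < length (out @ [x]) \<Longrightarrow> j \<noteq> length out \<Longrightarrow> (out @ [x]) ! j = out ! j"
  by (simp add: nth_append)

lemma inv1_push:
  assumes I: "inv1 m q L out"
  shows "inv1 (Suc m) (q @ [m]) L out"
proof -
  note J = I[unfolded inv1_def]
  note sq = J[THEN conjunct1] and qm = J[THEN conjunct2, THEN conjunct1]
    and om = J[THEN conjunct2, THEN conjunct2, THEN conjunct1]
    and C = J[THEN conjunct2, THEN conjunct2, THEN conjunct2, THEN conjunct1]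
    and D = J[THEN conjunct2, THEN conjunct2, THEN conjunct2, THEN conjunct2, THEN conjunct1]
    and E = J[THEN conjunct2, THEN conjunct2, THEN conjunct2, THEN conjunct2, THEN conjunct2]
  have oi: "\<And>i. i < length out \<Longrightarrow> out!i < m" using om nth_mem by blast
  show ?thesis unfolding inv1_def
  proof (intro conjI)
    show "sorted_wrt (<) (q @ [m])" using sq qm by (simp add: sorted_wrt_append)
    show "\<forall>x\<in>set (q @ [m]). x < Suc m" using qm by auto
    show "\<forall>x\<in>set out. x < Suc m" using om by auto
    show "\<forall>i j. i < j \<longrightarrow> j < length out \<longrightarrow> out!j < out!i \<longrightarrow>
       (\<forall>y\<in>set (q@[m]). \<forall>c\<in>set (q@[m]). y < out!j \<longrightarrow> out!j < c \<longrightarrow> c < out!i \<longrightarrow>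
          (\<exists>(A,B)\<in>set L. c \<in> A \<and> y \<in> B))"
    proof (intro allI impI ballI)
      fix i j y c assume h: "i < j" "j < length out" "out!j < out!i" "y \<in> set (q@[m])" "c \<in> set (q@[m])"
        "y < out!j" "out!j < c" "c < out!i"
      have "out!i < m" "out!j < m" using oi h by auto
      then have "y \<in> set q" "c \<in> set q" using h by auto
      then show "\<exists>(A,B)\<in>set L. c \<in> A \<and> y \<in> B" using C[rule_format, of i j y c] h by blast
    qed
    show "\<forall>i j k. i < j \<longrightarrow> j < k \<longrightarrow> k < length out \<longrightarrow> out!j < out!k \<longrightarrow> out!k < out!i \<longrightarrow>
       (\<forall>y\<in>set (q@[m]). \<not> y < out!j)"
    proof (intro allI impI ballI notI)
      fix i j k y assume h: "i < j" "j < k" "k < length out" "out!j < out!k" "out!k < out!i"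
        "y \<in> set (q@[m])" "y < out!j"
      have "out!j < m" using oi h by auto
      then have "y \<in> set q" using h by auto
      then show False using D[rule_format, of i j k y] h by blast
    qed
    show "\<forall>i j k l. i < j \<longrightarrow> j < k \<longrightarrow> k < l \<longrightarrow> l < length out \<longrightarrow>
       \<not> (out!l < out!j \<and> out!j < out!k \<and> out!k < out!i)" using E by blast
  qed
qed

lemma inv1_pop:
  assumes I: "inv1 m (x # q) L out"
  shows "inv1 m q L (out @ [x])"
proof -
  note J = I[unfolded inv1_def]
  note sq = J[THEN conjunct1] and qm = J[THEN conjunct2, THEN conjunct1]
    and om = J[THEN conjunct2, THEN conjunct2, THEN conjunct1]
    and C = J[THEN conjunct2, THEN conjunct2, THEN conjunct2, THEN conjunct1]
    and D = J[THEN conjunct2, THEN conjunct2, THEN conjunct2, THEN conjunct2, THEN conjunct1]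
    and E = J[THEN conjunct2, THEN conjunct2, THEN conjunct2, THEN conjunct2, THEN conjunct2]
  have xq: "\<And>y. y \<in> set q \<Longrightarrow> x < y" using sq by simp
  let ?o = "out @ [x]"
  have last: "?o ! length out = x" by simp
  show ?thesis unfolding inv1_def
  proof (intro conjI)
    show "sorted_wrt (<) q" using sq by simp
    show "\<forall>x\<in>set q. x < m" using qm by auto
    show "\<forall>x\<in>set ?o. x < m" using om qm by auto
    show "\<forall>i j. i < j \<longrightarrow> j < length ?o \<longrightarrow> ?o!j < ?o!i \<longrightarrow>
       (\<forall>y\<in>set q. \<forall>c\<in>set q. y < ?o!j \<longrightarrow> ?o!j < c \<longrightarrow> c < ?o!i \<longrightarrow>
          (\<exists>(A,B)\<in>set L. c \<in> A \<and> y \<in> B))"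
    proof (intro allI impI ballI)
      fix i j y c assume h: "i < j" "j < length ?o" "?o!j < ?o!i" "y \<in> set q" "c \<in> set q"
        "y < ?o!j" "?o!j < c" "c < ?o!i"
      show "\<exists>(A,B)\<in>set L. c \<in> A \<and> y \<in> B"
      proof (cases "j = length out")
        case True
        then show ?thesis using h xq[of y] last by auto
      next
        case False
        then have j: "j < length out" using h by simp
        then have e: "?o!j = out!j" "?o!i = out!i" using h by (auto simp: nth_append)
        have "out!j < out!i" "y < out!j" "out!j < c" "c < out!i" using h e by simp_all
        moreover have "y \<in> set (x#q)" "c \<in> set (x#q)" using h by simp_all
        ultimately show ?thesis using C[rule_format, of i j y c] h(1) j by blast
      qed
    qed
    show "\<forall>i j k. i < j \<longrightarrow> j < k \<longrightarrow> k < length ?o \<longrightarrow> ?o!j < ?o!k \<longrightarrow> ?o!k < ?o!i \<longrightarrow>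
       (\<forall>y\<in>set q. \<not> y < ?o!j)"
    proof (intro allI impI ballI notI)
      fix i j k y assume h: "i < j" "j < k" "k < length ?o" "?o!j < ?o!k" "?o!k < ?o!i"
        "y \<in> set q" "y < ?o!j"
      show False
      proof (cases "k = length out")
        case True
        then have "?o!j = out!j" using h by (auto simp: nth_append)
        then have "y < x" using h last True by simp
        then show ?thesis using h xq[of y] by simp
      next
        case False
        then have k: "k < length out" using h by simp
        then have e: "?o!j = out!j" "?o!i = out!i" "?o!k = out!k" using h by (auto simp: nth_append)
        have "out!j < out!k" "out!k < out!i" "y < out!j" using h e by simp_all
        moreover have "y \<in> set (x#q)" using h by simp
        ultimately show ?thesis using D[rule_format, of i j k y] h(1,2) k by blast
      qed
    qed
    show "\<forall>i j k l. i < j \<longrightarrow> j < k \<longrightarrow> k < l \<longrightarrow> l < length ?o \<longrightarrow>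
       \<not> (?o!l < ?o!j \<and> ?o!j < ?o!k \<and> ?o!k < ?o!i)"
    proof (intro allI impI notI)
      fix i j k l assume h: "i < j" "j < k" "k < l" "l < length ?o"
        "?o!l < ?o!j \<and> ?o!j < ?o!k \<and> ?o!k < ?o!i"
      have e: "?o!j = out!j" "?o!i = out!i" "?o!k = out!k" using h by (auto simp: nth_append)
      show False
      proof (cases "l = length out")
        case True
        have "out!j < out!k" "out!k < out!i" "x < out!j" using h e last True by simp_all
        then show ?thesis using D[rule_format, of i j k x] h(1,2,3) True by simp
      next
        case False
        then have l: "l < length out" using h by simp
        then have el: "?o!l = out!l" by (auto simp: nth_append)
        have "out!l < out!j" "out!j < out!k" "out!k < out!i" using h e el by simp_all
        then show ?thesis using E[rule_format, of i j k l] h(1,2,3) l by blast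
      qed
    qed
  qed
qed

lemma inv1_jump:
  assumes I: "inv1 m q L out" and i0: "0 < i0" "i0 < length q" and nl: "\<not> locked q L (q ! i0)"
  shows "inv1 m (take i0 q @ drop (Suc i0) q) ((set (drop (Suc i0) q), set (take i0 q)) # L) (out @ [q ! i0])"
proof -
  note J = I[unfolded inv1_def]
  note sq = J[THEN conjunct1] and qm = J[THEN conjunct2, THEN conjunct1]
    and om = J[THEN conjunct2, THEN conjunct2, THEN conjunct1]
    and C = J[THEN conjunct2, THEN conjunct2, THEN conjunct2, THEN conjunct1]
    and D = J[THEN conjunct2, THEN conjunct2, THEN conjunct2, THEN conjunct2, THEN conjunct1]
    and E = J[THEN conjunct2, THEN conjunct2, THEN conjunct2, THEN conjunct2, THEN conjunct2]
  define x where "x = q ! i0"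
  define q' where "q' = take i0 q @ drop (Suc i0) q"
  define L' where "L' = (set (drop (Suc i0) q), set (take i0 q)) # L"
  have xq: "x \<in> set q" using i0 x_def by simp
  have sub: "set q' \<subseteq> set q" unfolding q'_def
    using set_take_subset set_drop_subset by fastforce
  note spl = sorted_split[OF sq i0(2)]
  have xnot: "x \<notin> set q'"
  proof
    assume "x \<in> set q'"
    then have "x \<in> set (take i0 q) \<or> x \<in> set (drop (Suc i0) q)" unfolding q'_def by simp
    then show False using spl(1,2) x_def by auto
  qed
  have drop_mem: "\<And>c. c \<in> set q \<Longrightarrow> x < c \<Longrightarrow> c \<in> set (drop (Suc i0) q)"
    using spl x_def by fastforce
  have take_mem: "\<And>c. c \<in> set q \<Longrightarrow> c < x \<Longrightarrow> c \<in> set (take i0 q)"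
    using spl x_def by fastforce
  let ?o = "out @ [x]"
  have last: "?o ! length out = x" by simp
  have "inv1 m q' L' ?o" unfolding inv1_def
  proof (intro conjI)
    show "sorted_wrt (<) q'" unfolding q'_def by (rule sorted_remove[OF sq i0(2)])
    show "\<forall>x\<in>set q'. x < m" using qm sub by auto
    show "\<forall>x\<in>set ?o. x < m" using om qm xq by auto
    show "\<forall>i j. i < j \<longrightarrow> j < length ?o \<longrightarrow> ?o!j < ?o!i \<longrightarrow>
       (\<forall>y\<in>set q'. \<forall>c\<in>set q'. y < ?o!j \<longrightarrow> ?o!j < c \<longrightarrow> c < ?o!i \<longrightarrow>
          (\<exists>(A,B)\<in>set L'. c \<in> A \<and> y \<in> B))"
    proof (intro allI impI ballI)
      fix i j y c assume h: "i < j" "j < length ?o" "?o!j < ?o!i" "y \<in> set q'" "c \<in> set q'"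
        "y < ?o!j" "?o!j < c" "c < ?o!i"
      show "\<exists>(A,B)\<in>set L'. c \<in> A \<and> y \<in> B"
      proof (cases "j = length out")
        case True
        then have "y < x" "x < c" using h last by simp_all
        then have "c \<in> set (drop (Suc i0) q)" "y \<in> set (take i0 q)"
          using drop_mem take_mem h(4,5) sub by auto
        then show ?thesis unfolding L'_def by auto
      next
        case False
        then have j: "j < length out" using h by simp
        then have e: "?o!j = out!j" "?o!i = out!i" using h by (auto simp: nth_append)
        have "out!j < out!i" "y < out!j" "out!j < c" "c < out!i" using h e by simp_all
        moreover have "y \<in> set q" "c \<in> set q" using h sub by auto
        ultimately have "\<exists>(A,B)\<in>set L. c \<in> A \<and> y \<in> B" using C[rule_format, of i j y c] h(1) j by blast
        then show ?thesis unfolding L'_def by auto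
      qed
    qed
    show "\<forall>i j k. i < j \<longrightarrow> j < k \<longrightarrow> k < length ?o \<longrightarrow> ?o!j < ?o!k \<longrightarrow> ?o!k < ?o!i \<longrightarrow>
       (\<forall>y\<in>set q'. \<not> y < ?o!j)"
    proof (intro allI impI ballI notI)
      fix i j k y assume h: "i < j" "j < k" "k < length ?o" "?o!j < ?o!k" "?o!k < ?o!i"
        "y \<in> set q'" "y < ?o!j"
      show False
      proof (cases "k = length out")
        case True
        then have e: "?o!j = out!j" "?o!i = out!i" using h by (auto simp: nth_append)
        have "out!j < out!i" "y < out!j" "out!j < x" "x < out!i" using h e last True by simp_all
        moreover have "y \<in> set q" using h sub by auto
        ultimately obtain A B where "(A,B) \<in> set L" "x \<in> A" "y \<in> B"
          using C[rule_format, of i j y x] h(1,2,3) True xq by auto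
        then have "locked q L x" unfolding locked_def using \<open>y \<in> set q\<close> by blast
        then show ?thesis using nl x_def by simp
      next
        case False
        then have k: "k < length out" using h by simp
        then have e: "?o!j = out!j" "?o!i = out!i" "?o!k = out!k" using h by (auto simp: nth_append)
        have "out!j < out!k" "out!k < out!i" "y < out!j" using h e by simp_all
        moreover have "y \<in> set q" using h sub by auto
        ultimately show ?thesis using D[rule_format, of i j k y] h(1,2) k by blast
      qed
    qed
    show "\<forall>i j k l. i < j \<longrightarrow> j < k \<longrightarrow> k < l \<longrightarrow> l < length ?o \<longrightarrow>
       \<not> (?o!l < ?o!j \<and> ?o!j < ?o!k \<and> ?o!k < ?o!i)"
    proof (intro allI impI notI)
      fix i j k l assume h: "i < j" "j < k" "k < l" "l < length ?o"
        "?o!l < ?o!j \<and> ?o!j < ?o!k \<and> ?o!k < ?o!i"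
      have e: "?o!j = out!j" "?o!i = out!i" "?o!k = out!k" using h by (auto simp: nth_append)
      show False
      proof (cases "l = length out")
        case True
        have "out!j < out!k" "out!k < out!i" "x < out!j" using h e last True by simp_all
        then show ?thesis using D[rule_format, of i j k x] h(1,2,3) True xq by simp
      next
        case False
        then have l: "l < length out" using h by simp
        then have el: "?o!l = out!l" by (auto simp: nth_append)
        have "out!l < out!j" "out!j < out!k" "out!k < out!i" using h e el by simp_all
        then show ?thesis using E[rule_format, of i j k l] h(1,2,3) l by blast
      qed
    qed
  qed
  then show ?thesis unfolding q'_def L'_def x_def .
qed

lemma inv1_all: "ll_jq n m q L out \<Longrightarrow> inv1 m q L out"
proof (induction rule: ll_jq.induct)
  case init
  then show ?case unfolding inv1_def by simp
next
  case (push m q L out)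
  then show ?case using inv1_push by blast
next
  case (pop_front m x q L out)
  then show ?case using inv1_pop by blast
next
  case (jump m q L out i)
  then show ?case using inv1_jump by blast
qed

lemma dir1:
  assumes "ll_jq_output n p"
  shows "avoids p [4,2,3,1]"
proof -
  obtain L where "ll_jq n (Suc n) [] L p" using assms unfolding ll_jq_output_def by blast
  then have "inv1 (Suc n) [] L p" by (rule inv1_all)
  then have E: "\<forall>i j k l. i < j \<longrightarrow> j < k \<longrightarrow> k < l \<longrightarrow> l < length p \<longrightarrow>
       \<not> (p!l < p!j \<and> p!j < p!k \<and> p!k < p!i)" unfolding inv1_def by blast
  show ?thesis unfolding avoids_def pat_iff using E by blast
qed

lemma push_many:
  "ll_jq n m q L out \<Longrightarrow> m \<le> m' \<Longrightarrow> m' \<le> Suc n \<Longrightarrow> ll_jq n m' (q @ [m..<m']) L out"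
proof (induction m')
  case 0
  then show ?case by simp
next
  case (Suc m')
  show ?case
  proof (cases "m \<le> m'")
    case True
    then have "ll_jq n m' (q @ [m..<m']) L out" using Suc by simp
    then have "ll_jq n (Suc m') ((q @ [m..<m']) @ [m']) L out"
      using Suc.prems(3) by (intro ll_jq.push) simp_all
    then show ?thesis using True by simp
  next
    case False
    then have "m = Suc m'" using Suc.prems by simp
    then show ?thesis using Suc.prems by simp
  qed
qed

lemma set_take_nth: "y \<in> set (take k p) \<longleftrightarrow> (\<exists>i<min k (length p). p ! i = y)"
  by (auto simp: in_set_conv_nth)

lemma distinct_nth_notin_take:
  "distinct p \<Longrightarrow> k < length p \<Longrightarrow> p ! k \<notin> set (take k p)"
  by (auto simp: set_take_nth nth_eq_iff_index_eq)

definition lockinv :: "nat list \<Rightarrow> nat \<Rightarrow> (nat set \<times> nat set) list \<Rightarrow> bool" where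
  "lockinv p k L \<longleftrightarrow> (\<forall>(A,B)\<in>set L. \<exists>j<k. (\<forall>a\<in>A. p!j < a \<and> (\<exists>i\<le>j. a \<le> p!i)) \<and> (\<forall>b\<in>B. b < p!j))"

lemma lockinv_E: "lockinv p k L \<Longrightarrow> (A,B) \<in> set L \<Longrightarrow>
   \<exists>j<k. (\<forall>a\<in>A. p!j < a \<and> (\<exists>i\<le>j. a \<le> p!i)) \<and> (\<forall>b\<in>B. b < p!j)"
  unfolding lockinv_def by fastforce

lemma locked_E: "locked q L x \<Longrightarrow> \<exists>A B b. (A,B) \<in> set L \<and> x \<in> A \<and> b \<in> B \<and> b \<in> set q"
  unfolding locked_def by fast

lemma constr:
  assumes dp: "distinct p" and sp: "set p = {1..n}"
    and av: "\<not> (\<exists>i j k l. i<j \<and> j<k \<and> k<l \<and> l<length p \<and> p!l < p!j \<and> p!j < p!k \<and> p!k < p!i)"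
  shows "k \<le> length p \<Longrightarrow> \<exists>m L. ll_jq n m (filter (\<lambda>y. y \<notin> set (take k p)) [1..<m]) L (take k p)
     \<and> 1 \<le> m \<and> m \<le> Suc n \<and> (\<forall>i<k. p!i < m) \<and> (\<forall>a. 0 < a \<longrightarrow> a < m \<longrightarrow> (\<exists>i<k. a \<le> p!i))
     \<and> lockinv p k L"
proof (induction k)
  case 0
  have "ll_jq n 1 [] [] []" by (rule ll_jq.init)
  then show ?case unfolding lockinv_def by (intro exI[of _ 1] exI[of _ "[]"]) simp
next
  case (Suc k)
  then have kl: "k < length p" by simp
  then obtain m L where R: "ll_jq n m (filter (\<lambda>y. y \<notin> set (take k p)) [1..<m]) L (take k p)"
    and m1: "1 \<le> m" and mn: "m \<le> Suc n" and pm: "\<forall>i<k. p!i < m"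
    and am: "\<forall>a. 0 < a \<longrightarrow> a < m \<longrightarrow> (\<exists>i<k. a \<le> p!i)" and li: "lockinv p k L"
    using Suc.IH[OF Suc_leD[OF Suc.prems]] by blast
  define P where "P = (\<lambda>y. y \<notin> set (take k p))"
  define P' where "P' = (\<lambda>y. y \<notin> set (take (Suc k) p))"
  define x where "x = p ! k"
  have xs: "x \<in> {1..n}" using sp kl x_def nth_mem by blast
  define m' where "m' = max m (Suc x)"
  have mm': "m \<le> m'" and m'n: "m' \<le> Suc n" using mn xs unfolding m'_def by auto
  define q' where "q' = filter P [1..<m']"
  have R1: "ll_jq n m' (filter P [1..<m] @ [m..<m']) L (take k p)"
    using push_many[OF R[folded P_def] mm' m'n] .
  have notin: "\<And>y. m \<le> y \<Longrightarrow> P y" unfolding P_def using pm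
    by (auto simp: set_take_nth)
  have "[1..<m'] = [1..<m] @ [m..<m']" using m1 mm' upt_add_eq_append[of 1 m "m' - m"] by simp
  then have "filter P [1..<m'] = filter P [1..<m] @ filter P [m..<m']" by simp
  also have "filter P [m..<m'] = [m..<m']" using notin by (simp add: filter_id_conv)
  finally have R2: "ll_jq n m' q' L (take k p)" using R1 unfolding q'_def by simp
  have sq: "sorted_wrt (<) q'" unfolding q'_def by (simp add: sorted_wrt_filter)
  have dq: "distinct q'" unfolding q'_def by simp
  have xin: "x \<in> set q'" unfolding q'_def P_def
    using xs distinct_nth_notin_take[OF dp kl] x_def m'_def by auto
  then obtain i0 where i0: "i0 < length q'" "q' ! i0 = x" by (auto simp: in_set_conv_nth)
  have tk: "take (Suc k) p = take k p @ [x]" using kl x_def by (simp add: take_Suc_conv_app_nth)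
  have newq: "take i0 q' @ drop (Suc i0) q' = filter P' [1..<m']"
  proof -
    have "take i0 q' @ drop (Suc i0) q' = filter (\<lambda>y. y \<noteq> x) q'"
      using remove_filter[OF dq i0(1)] i0(2) by simp
    also have "\<dots> = filter P' [1..<m']" unfolding q'_def P_def P'_def tk
      by (simp add: filter_filter) (rule filter_cong; auto)
    finally show ?thesis .
  qed
  note spl = sorted_split[OF sq i0(1)]
  have q'm: "\<And>y. y \<in> set q' \<Longrightarrow> 0 < y \<and> y < m'" unfolding q'_def by auto
  have am': "\<forall>a. 0 < a \<longrightarrow> a < m' \<longrightarrow> (\<exists>i<Suc k. a \<le> p!i)"
  proof (intro allI impI)
    fix a assume "0 < a" "a < m'"
    show "\<exists>i<Suc k. a \<le> p!i"
    proof (cases "a < m")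
      case True
      then show ?thesis using am \<open>0 < a\<close> less_SucI by blast
    next
      case False
      then have "a \<le> p!k" using \<open>a < m'\<close> x_def unfolding m'_def by auto
      then show ?thesis by blast
    qed
  qed
  have pm': "\<forall>i<Suc k. p!i < m'"
    using pm x_def unfolding m'_def by (auto simp: less_Suc_eq)
  have m'1: "1 \<le> m'" using m1 mm' by simp
  have li': "lockinv p (Suc k) L" using li unfolding lockinv_def by (fastforce simp: less_Suc_eq)
  show ?case
  proof (cases "i0 = 0")
    case True
    have "q' = x # drop 1 q'" using Cons_nth_drop_Suc[OF i0(1)] i0(2) True by simp
    then have "ll_jq n m' (x # drop 1 q') L (take k p)" using R2 by simp
    then have "ll_jq n m' (drop 1 q') L (take k p @ [x])" by (rule ll_jq.pop_front)
    moreover have "drop 1 q' = filter P' [1..<m']" using newq True by simp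
    ultimately have "ll_jq n m' (filter P' [1..<m']) L (take (Suc k) p)" using tk by simp
    then show ?thesis unfolding P'_def using m'1 m'n pm' am' li'
      by (intro exI[of _ m'] exI[of _ L] conjI) assumption+
  next
    case False
    have nl: "\<not> locked q' L (q' ! i0)"
    proof
      assume "locked q' L (q' ! i0)"
      then obtain A B b where AB: "(A,B) \<in> set L" "x \<in> A" and b: "b \<in> B" "b \<in> set q'"
        using locked_E i0(2) by metis
      obtain j where j: "j < k" "\<forall>a\<in>A. p!j < a \<and> (\<exists>i\<le>j. a \<le> p!i)" "\<forall>b\<in>B. b < p!j"
        using lockinv_E[OF li AB(1)] by blast
      obtain i where i: "i \<le> j" "x \<le> p!i" and xj: "p!j < x" using j(2) AB(2) by blast
      have bj: "b < p!j" using j(3) b(1) by blast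
      have "0 < b \<and> b < m'" using q'm b(2) by blast
      then have "b \<in> {1..n}" using m'n by simp
      then have "b \<in> set p" using sp by simp
      then obtain l where l: "l < length p" "p!l = b" by (auto simp: in_set_conv_nth)
      have "P b" using b(2) unfolding q'_def by simp
      then have pb: "b \<notin> set (take k p)" unfolding P_def .
      have "\<not> l < k"
      proof
        assume "l < k"
        then have "p!l \<in> set (take k p)" using l(1) by (auto simp: set_take_nth)
        then show False using pb l(2) by simp
      qed
      moreover have "l \<noteq> k" using l bj xj x_def by auto
      ultimately have lk: "k < l" by simp
      have ij: "i \<noteq> j" using i xj by auto
      have il: "i < length p" using i(1) j(1) kl by simp
      have "p!i \<noteq> p!k" using nth_eq_iff_index_eq[OF dp il kl] i(1) j(1) by simp
      then have "x < p!i" using i x_def by simp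
      have "i<j \<and> j<k \<and> k<l \<and> l<length p \<and> p!l < p!j \<and> p!j < p!k \<and> p!k < p!i"
        using i ij j(1) lk l bj xj x_def \<open>x < p!i\<close> by simp
      then show False using av by blast
    qed
    have J: "ll_jq n m' (take i0 q' @ drop (Suc i0) q') ((set (drop (Suc i0) q'), set (take i0 q')) # L)
       (take k p @ [q' ! i0])"
      using ll_jq.jump[OF R2 _ i0(1) nl] False by simp
    have A1: "\<forall>a\<in>set (drop (Suc i0) q'). p ! k < a \<and> (\<exists>i\<le>k. a \<le> p ! i)"
    proof
      fix a assume a: "a \<in> set (drop (Suc i0) q')"
      have xa: "x < a" using spl(2) i0(2) a by blast
      have "a \<in> set q'" using a in_set_dropD by fast
      then have "0 < a" "a < m'" using q'm by auto
      then obtain i where "i < Suc k" "a \<le> p ! i" using am' by blast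
      then have "\<exists>i\<le>k. a \<le> p ! i" using less_Suc_eq_le by blast
      then show "p ! k < a \<and> (\<exists>i\<le>k. a \<le> p ! i)" using xa x_def by simp
    qed
    have B1: "\<forall>b\<in>set (take i0 q'). b < p ! k" using spl(1) i0(2) x_def by simp
    have li'': "lockinv p (Suc k) ((set (drop (Suc i0) q'), set (take i0 q')) # L)"
      using li' A1 B1 unfolding lockinv_def by auto
    have "ll_jq n m' (filter P' [1..<m']) ((set (drop (Suc i0) q'), set (take i0 q')) # L) (take (Suc k) p)"
      using J newq tk i0(2) by simp
    then show ?thesis unfolding P'_def using m'1 m'n pm' am' li''
      by (intro exI[of _ m'] exI[of _ "(set (drop (Suc i0) q'), set (take i0 q')) # L"] conjI) assumption+
  qed
qed

lemma dir2:
  assumes perm: "is_perm n p" and a: "avoids p [4,2,3,1]"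
  shows "ll_jq_output n p"
proof -
  have dp: "distinct p" and sp: "set p = {1..n}" using perm unfolding is_perm_def by auto
  have av: "\<not> (\<exists>i j k l. i<j \<and> j<k \<and> k<l \<and> l<length p \<and> p!l < p!j \<and> p!j < p!k \<and> p!k < p!i)"
    using a unfolding avoids_def pat_iff .
  have len: "length p = n" using distinct_card[OF dp] sp by simp
  obtain m L where R: "ll_jq n m (filter (\<lambda>y. y \<notin> set (take (length p) p)) [1..<m]) L (take (length p) p)"
    and m1: "1 \<le> m" and mn: "m \<le> Suc n" and pm: "\<forall>i<length p. p!i < m"
    using constr[OF dp sp av, of "length p"] by blast
  have mS: "m = Suc n"
  proof (cases "n = 0")
    case True
    then show ?thesis using m1 mn by simp
  next
    case False
    then have "n \<in> set p" using sp by simp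
    then obtain i where "i < length p" "p!i = n" by (auto simp: in_set_conv_nth)
    then have "n < m" using pm by auto
    then show ?thesis using mn by simp
  qed
  have "filter (\<lambda>y. y \<notin> set p) [1..<Suc n] = []" using sp by (auto simp: filter_empty_conv)
  then have "ll_jq n (Suc n) [] L p" using R mS by simp
  then show ?thesis unfolding ll_jq_output_def by blast
qed

theorem mainTheorem2:
  fixes n :: nat and p :: "nat list"
  assumes "is_perm n p"
  shows "ll_jq_output n p \<longleftrightarrow> avoids p [4, 2, 3, 1]"
  using dir1 dir2[OF assms] by blast

end
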